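(* Let $\Phi:\mathbb{R}\to\mathbb{R}$ be smooth and convex, and let $r_\pm,v_\pm,\sigma\in\mathbb{R}$ with $\sigma\neq0$, $r_-\neq r_+$, $\sigma[\![r]\!]+[\![v]\!]=0$ and $\sigma[\![v]\!]+[\![\Phi'(r)]\!]=0$. Then there is a one-to-one correspondence between fronts $(R,V)$ with speed $\sigma$ and asymptotic states $(r_\pm,v_\pm)$ and bounded measurable solutions $W$ of $$W=\mathcal{A}\widehat\Phi'(\mathcal{A}W)\quad\text{with}\quad W(\varphi)\to\pm1 \text{ as }\varphi\to\pm\infty,$$ given by $V=\langle v\rangle+\tfrac12[\![v]\!]W$ and $R(\varphi-\tfrac12)=\langle r\rangle+\tfrac12[\![r]\!](\mathcal{A}W)(\varphi)$.
   Context: A front with speed $\sigma$ and asymptotic states $(r_\pm,v_\pm)$ is a pair $R,V\in C^1(\mathbb{R})\cap L^\infty(\mathbb{R})$ with $R(\varphi)\to r_\pm$, $V(\varphi)\to v_\pm$ as $\varphi\to\pm\infty$, solving $\sigma R'(\varphi)+V(\varphi+1)-V(\varphi)=0$ and $\sigma V'(\varphi)+\Phi'(R(\varphi))-\Phi'(R(\varphi-1))=0$ for all $\varphi$. Notation: $[\![\psi]\!]=\psi(r_+,v_+)-\psi(r_-,v_-)$, $\langle\psi\rangle=\tfrac12(\psi(r_+,v_+)+\psi(r_-,v_-))$. The averaging operator is $(\mathcal{A}U)(\varphi)=\int_{\varphi-1/2}^{\varphi+1/2}U(s)\,ds$. The normalised potential is $\widehat\Phi(w)=\frac{4}{[\![\Phi'(r)]\!][\![r]\!]}\Phi(\langle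 r\rangle+\tfrac12[\![r]\!]w)-\frac{2\langle\Phi'(r)\rangle}{[\![\Phi'(r)]\!]}w$ (note $[\![\Phi'(r)]\!]=\sigma^2[\![r]\!]\neq0$). *)

theory Defs
  imports "HOL-Analysis.Analysis"
begin

definition smooth_real :: "(real \<Rightarrow> real) \<Rightarrow> bool" where
  "smooth_real f \<longleftrightarrow> (\<forall>n x. ((deriv ^^ n) f) differentiable (at x))"

definition avg :: "(real \<Rightarrow> real) \<Rightarrow> real \<Rightarrow> real" where
  "avg U \<phi> = integral {\<phi> - 1/2 .. \<phi> + 1/2} U"

definition jump :: "real \<Rightarrow> real \<Rightarrow> real" where
  "jump am ap = ap - am"
definition mean :: "real \<Rightarrow> real \<Rightarrow> real" where
  "mean am ap = (ap + am) / 2"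

definition Phi_hat :: "(real \<Rightarrow> real) \<Rightarrow> real \<Rightarrow> real \<Rightarrow> real \<Rightarrow> real" where
  "Phi_hat \<Phi> rm rp w =
     4 / (jump (deriv \<Phi> rm) (deriv \<Phi> rp) * jump rm rp)
       * \<Phi> (mean rm rp + jump rm rp / 2 * w)
     - 2 * mean (deriv \<Phi> rm) (deriv \<Phi> rp) / jump (deriv \<Phi> rm) (deriv \<Phi> rp) * w"

definition is_front ::
  "(real \<Rightarrow> real) \<Rightarrow> real \<Rightarrow> real \<Rightarrow> real \<Rightarrow> real \<Rightarrow> real
     \<Rightarrow> (real \<Rightarrow> real) \<Rightarrow> (real \<Rightarrow> real) \<Rightarrow> bool" where
  "is_front \<Phi> \<sigma> rm rp vm vp R V \<longleftrightarrow>
     R C1_differentiable_on UNIV \<and> V C1_differentiable_on UNIV \<and>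
     bounded (range R) \<and> bounded (range V) \<and>
     (R \<longlongrightarrow> rm) at_bot \<and> (R \<longlongrightarrow> rp) at_top \<and>
     (V \<longlongrightarrow> vm) at_bot \<and> (V \<longlongrightarrow> vp) at_top \<and>
     (\<forall>\<phi>. \<sigma> * deriv R \<phi> + V (\<phi> + 1) - V \<phi> = 0) \<and>
     (\<forall>\<phi>. \<sigma> * deriv V \<phi> + deriv \<Phi> (R \<phi>) - deriv \<Phi> (R (\<phi> - 1)) = 0)"

definition is_W_sol ::
  "(real \<Rightarrow> real) \<Rightarrow> real \<Rightarrow> real \<Rightarrow> (real \<Rightarrow> real) \<Rightarrow> bool" where
  "is_W_sol \<Phi> rm rp W \<longleftrightarrow>
     W \<in> borel_measurable lborel \<and> bounded (range W) \<and>
     (\<forall>\<phi>. W \<phi> = avg (\<lambda>s. deriv (Phi_hat \<Phi> rm rp) (avg W s)) \<phi>) \<and>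
     (W \<longlongrightarrow> -1) at_bot \<and> (W \<longlongrightarrow> 1) at_top"

definition front_corr ::
  "real \<Rightarrow> real \<Rightarrow> real \<Rightarrow> real \<Rightarrow> (real \<Rightarrow> real) \<Rightarrow> (real \<Rightarrow> real)
     \<Rightarrow> (real \<Rightarrow> real) \<Rightarrow> bool" where
  "front_corr rm rp vm vp R V W \<longleftrightarrow>
     (\<forall>\<phi>. V \<phi> = mean vm vp + jump vm vp / 2 * W \<phi>) \<and>
     (\<forall>\<phi>. R (\<phi> - 1/2) = mean rm rp + jump rm rp / 2 * avg W \<phi>)"

end

theory Submission
  imports Defs
begin

lemma meas_int:
  fixes W :: "real \<Rightarrow> real"
  assumes "W \<in> borel_measurable lborel" "\<And>x. \<bar>W x\<bar> \<le> B"
  shows "W integrable_on {a..b}"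
proof (rule measurable_bounded_by_integrable_imp_integrable[where g="\<lambda>_. B"])
  have "W \<in> borel_measurable lebesgue"
    using assms(1) by (metis measurable_completion measurable_lborel2 sets_lborel measurable_cong_sets)
  then show "W \<in> borel_measurable (lebesgue_on {a..b})"
    by (simp add: measurable_restrict_space1)
qed (use assms in auto)


definition prim :: "(real\<Rightarrow>real) \<Rightarrow> real \<Rightarrow> real" where
  "prim f x = integral {0..x} f - integral {x..0} f"

lemma int_empty0: "b \<le> a \<Longrightarrow> integral {a..b} (f::real\<Rightarrow>real) = 0"
  by (cases "a = b") auto

lemma prim_diff:
  assumes li: "\<And>a b. f integrable_on {a..b}" and ab: "a \<le> b"
  shows "integral {a..b} f = prim f b - prim f a"
proof -
  consider "0 \<le> a" | "a \<le> 0" "0 \<le> b" | "b \<le> 0" using ab by linarith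
  then show ?thesis
  proof cases
    case 1
    have "integral {0..b} f = integral {0..a} f + integral {a..b} f"
      using Henstock_Kurzweil_Integration.integral_combine[OF 1 ab li] by simp
    then show ?thesis using 1 ab by (simp add: prim_def int_empty0)
  next
    case 2
    have "integral {a..b} f = integral {a..0} f + integral {0..b} f"
      using Henstock_Kurzweil_Integration.integral_combine[OF 2 li] by simp
    then show ?thesis using 2 by (simp add: prim_def int_empty0)
  next
    case 3
    have "integral {a..0} f = integral {a..b} f + integral {b..0} f"
      using Henstock_Kurzweil_Integration.integral_combine[OF ab 3 li] by simp
    then show ?thesis using 3 ab by (simp add: prim_def int_empty0)
  qed
qed

lemma avg_prim:
  assumes li: "\<And>a b. f integrable_on {a..b}"
  shows "avg f x = prim f (x+1/2) - prim f (x-1/2)"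
  unfolding avg_def by (rule prim_diff[OF li]) simp

lemma prim_cont:
  assumes li: "\<And>a b. f integrable_on {a..b}"
  shows "isCont (prim f) x"
proof -
  let ?a = "x - 1" and ?b = "x + 1"
  have c: "continuous_on {?a..?b} (\<lambda>u. integral {?a..u} f + prim f ?a)"
    by (intro continuous_intros indefinite_integral_continuous_1 li)
  have eq: "\<And>u. u \<in> {?a..?b} \<Longrightarrow> integral {?a..u} f + prim f ?a = prim f u"
    using prim_diff[OF li] by force
  have "continuous_on {?a..?b} (prim f)"
    using continuous_on_eq[OF c eq] .
  then show ?thesis
    by (rule continuous_on_interior) (simp add: interior_atLeastAtMost_real)
qed

lemma prim_deriv:
  assumes c: "continuous_on UNIV f"
  shows "(prim f has_real_derivative f x) (at x)"
proof -
  have li: "\<And>a b. f integrable_on {a..b}"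
    using c by (intro integrable_continuous_real) (auto intro: continuous_on_subset)
  let ?a = "x - 1" and ?b = "x + 1"
  have "((\<lambda>u. integral {?a..u} f) has_real_derivative f x) (at x within {?a..?b})"
    by (rule integral_has_real_derivative) (auto intro: continuous_on_subset[OF c])
  then have d: "((\<lambda>u. integral {?a..u} f + prim f ?a) has_real_derivative f x) (at x)"
    by (subst (asm) at_within_interior) (auto simp: interior_atLeastAtMost_real intro: derivative_eq_intros)
  show ?thesis
    apply (rule has_field_derivative_transform_within_open[OF d, where S="{?a<..<?b}"])
    using prim_diff[OF li] by force+
qed

lemma avg_cont:
  assumes li: "\<And>a b. f integrable_on {a..b}"
  shows "continuous_on UNIV (avg f)"
proof -
  have "avg f = (\<lambda>x. prim f (x+1/2) - prim f (x-1/2))"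
    using avg_prim[OF li] by auto
  moreover have "continuous_on UNIV (\<lambda>x. prim f (x+1/2) - prim f (x-1/2))"
    by (intro continuous_at_imp_continuous_on ballI continuous_intros
        continuous_at_compose[OF _ prim_cont[OF li], unfolded o_def]) 
  ultimately show ?thesis by simp
qed

lemma avg_deriv:
  assumes c: "continuous_on UNIV f"
  shows "(avg f has_real_derivative f (x+1/2) - f (x-1/2)) (at x)"
proof -
  have li: "\<And>a b. f integrable_on {a..b}"
    using c by (intro integrable_continuous_real) (auto intro: continuous_on_subset)
  have "avg f = (\<lambda>x. prim f (x+1/2) - prim f (x-1/2))"
    using avg_prim[OF li] by auto
  moreover have "((\<lambda>x. prim f (x+1/2) - prim f (x-1/2)) has_real_derivative f (x+1/2) - f (x-1/2)) (at x)"
  proof -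
    have g1: "((\<lambda>x. x + 1/2) has_real_derivative 1) (at x)" by (auto intro!: derivative_eq_intros)
    have g2: "((\<lambda>x. x - 1/2) has_real_derivative 1) (at x)" by (auto intro!: derivative_eq_intros)
    show ?thesis
      using DERIV_diff[OF DERIV_chain2[OF prim_deriv[OF c] g1] DERIV_chain2[OF prim_deriv[OF c] g2]]
      by simp
  qed
  ultimately show ?thesis by simp
qed


lemma avg_close:
  assumes li: "\<And>a b. f integrable_on {a..b}"
    and b: "\<And>s. s \<in> {x-1/2..x+1/2} \<Longrightarrow> \<bar>f s - L\<bar> \<le> e"
  shows "\<bar>avg f x - L\<bar> \<le> e"
proof -
  have e0: "0 \<le> e" using b[of x] by auto
  have "avg f x - L = integral {x-1/2..x+1/2} (\<lambda>s. f s - L)"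
    unfolding avg_def by (subst integral_diff) (auto intro: li)
  moreover have "((\<lambda>s. f s - L) has_integral integral {x-1/2..x+1/2} (\<lambda>s. f s - L)) {x-1/2..x+1/2}"
    by (intro integrable_integral integrable_diff li) auto
  from has_integral_bound_real[OF e0 finite.emptyI this] b
  have "norm (integral {x-1/2..x+1/2} (\<lambda>s. f s - L)) \<le> e" by simp
  ultimately show ?thesis by simp
qed

lemma avg_lim_top:
  assumes li: "\<And>a b. f integrable_on {a..b}" and lim: "(f \<longlongrightarrow> L) at_top"
  shows "(avg f \<longlongrightarrow> L) at_top"
proof (rule tendstoI)
  fix e :: real assume "e > 0"
  then have "e/2 > 0" by simp
  from tendstoD[OF lim this] obtain N where N: "\<And>s. s \<ge> N \<Longrightarrow> dist (f s) L < e/2"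
    by (auto simp: eventually_at_top_linorder)
  show "\<forall>\<^sub>F x in at_top. dist (avg f x) L < e"
    unfolding eventually_at_top_linorder
  proof (intro exI allI impI)
    fix x assume "x \<ge> N + 1/2"
    then have "\<bar>avg f x - L\<bar> \<le> e/2"
    proof (intro avg_close[OF li])
      fix s assume "s \<in> {x-1/2..x+1/2}"
      then have "dist (f s) L < e/2" using N \<open>x \<ge> N + 1/2\<close> by auto
      then show "\<bar>f s - L\<bar> \<le> e/2" by (simp add: dist_real_def)
    qed
    then show "dist (avg f x) L < e" using \<open>e>0\<close> by (simp add: dist_real_def)
  qed
qed

lemma avg_lim_bot:
  assumes li: "\<And>a b. f integrable_on {a..b}" and lim: "(f \<longlongrightarrow> L) at_bot"
  shows "(avg f \<longlongrightarrow> L) at_bot"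
proof (rule tendstoI)
  fix e :: real assume "e > 0"
  then have "e/2 > 0" by simp
  from tendstoD[OF lim this] obtain N where N: "\<And>s. s \<le> N \<Longrightarrow> dist (f s) L < e/2"
    by (auto simp: eventually_at_bot_linorder)
  show "\<forall>\<^sub>F x in at_bot. dist (avg f x) L < e"
    unfolding eventually_at_bot_linorder
  proof (intro exI allI impI)
    fix x assume "x \<le> N - 1/2"
    then have "\<bar>avg f x - L\<bar> \<le> e/2"
    proof (intro avg_close[OF li])
      fix s assume "s \<in> {x-1/2..x+1/2}"
      then have "dist (f s) L < e/2" using N \<open>x \<le> N - 1/2\<close> by auto
      then show "\<bar>f s - L\<bar> \<le> e/2" by (simp add: dist_real_def)
    qed
    then show "dist (avg f x) L < e" using \<open>e>0\<close> by (simp add: dist_real_def)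
  qed
qed


lemma shift_bot:
  fixes f :: "real \<Rightarrow> real"
  assumes "(f \<longlongrightarrow> L) at_bot"
  shows "((\<lambda>x. f (x + c)) \<longlongrightarrow> L) at_bot"
proof -
  have "filterlim (\<lambda>x::real. x + c) at_bot at_bot"
    unfolding filterlim_at_bot eventually_at_bot_linorder
  proof (intro allI)
    fix Z :: real show "\<exists>N. \<forall>n\<le>N. n + c \<le> Z" by (rule exI[of _ "Z - c"]) auto
  qed
  from filterlim_compose[OF assms this] show ?thesis by (simp add: o_def)
qed

lemma shift_top:
  fixes f :: "real \<Rightarrow> real"
  assumes "(f \<longlongrightarrow> L) at_top"
  shows "((\<lambda>x. f (x + c)) \<longlongrightarrow> L) at_top"
proof -
  have "filterlim (\<lambda>x::real. x + c) at_top at_top"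
    unfolding filterlim_at_top eventually_at_top_linorder
  proof (intro allI)
    fix Z :: real show "\<exists>N. \<forall>n\<ge>N. Z \<le> n + c" by (rule exI[of _ "Z - c"]) auto
  qed
  from filterlim_compose[OF assms this] show ?thesis by (simp add: o_def)
qed

lemma avg_affine:
  assumes li: "\<And>a b. f integrable_on {a..b}"
  shows "avg (\<lambda>s. a + b * f s) x = a + b * avg f x"
  unfolding avg_def
  by (subst integral_add) (auto intro: li integrable_on_mult_right simp: integral_mult_right)

lemma smooth_facts:
  assumes "smooth_real \<Phi>"
  shows "\<And>x. (\<Phi> has_real_derivative deriv \<Phi> x) (at x)"
    and "continuous_on UNIV (deriv \<Phi>)"
proof -
  have d0: "\<Phi> differentiable (at x)" for x
    using assms unfolding smooth_real_def by (metis funpow_0)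
  have d1: "deriv \<Phi> differentiable (at x)" for x
  proof -
    have "(deriv ^^ 1) \<Phi> = deriv \<Phi>" by simp
    then show ?thesis using assms unfolding smooth_real_def by metis
  qed
  show "\<And>x. (\<Phi> has_real_derivative deriv \<Phi> x) (at x)"
    using d0 by (simp add: DERIV_deriv_iff_real_differentiable)
  show "continuous_on UNIV (deriv \<Phi>)"
    using d1 by (simp add: continuous_at_imp_continuous_on differentiable_imp_continuous_within)
qed

lemma deriv_Phi_hat:
  assumes "smooth_real \<Phi>" "jump rm rp \<noteq> 0" "jump (deriv \<Phi> rm) (deriv \<Phi> rp) \<noteq> 0"
  shows "deriv (Phi_hat \<Phi> rm rp) w =
     2 / jump (deriv \<Phi> rm) (deriv \<Phi> rp) *
       (deriv \<Phi> (mean rm rp + jump rm rp / 2 * w) - mean (deriv \<Phi> rm) (deriv \<Phi> rp))"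
proof -
  let ?jP = "jump (deriv \<Phi> rm) (deriv \<Phi> rp)" and ?d = "jump rm rp"
  have "(Phi_hat \<Phi> rm rp has_real_derivative
     4 / (?jP * ?d) * (deriv \<Phi> (mean rm rp + ?d / 2 * w) * (?d/2))
       - 2 * mean (deriv \<Phi> rm) (deriv \<Phi> rp) / ?jP) (at w)"
    unfolding Phi_hat_def[abs_def]
    using assms(2,3) by (auto intro!: derivative_eq_intros DERIV_chain2[OF smooth_facts(1)[OF assms(1)]])
  from DERIV_imp_deriv[OF this] show ?thesis
    using assms(2,3) by (simp add: field_simps)
qed


lemma alg1:
  fixes \<sigma> rm rp vm vp Rv A :: real
  assumes "\<sigma> \<noteq> 0" "vp \<noteq> vm" "\<sigma> * (rp-rm) + (vp-vm) = 0" "\<sigma> * Rv + A = \<sigma> * rm + vm"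
  shows "Rv = (rp+rm)/2 + (rp-rm)/2 * (- ((vp+vm)/2) * (2/(vp-vm)) + 2/(vp-vm) * A)"
proof -
  define d where "d = rp - rm"
  have rp: "rp = rm + d" by (simp add: d_def)
  have vp: "vp = vm - \<sigma> * d" using assms(3) by (simp add: d_def)
  have R: "Rv = (\<sigma> * rm + vm - A)/\<sigma>" using assms(1,4) by (simp add: field_simps)
  have ne: "d \<noteq> 0" using assms(2) vp by auto
  show ?thesis unfolding R rp vp using ne assms(1) by (simp add: field_simps)
qed

lemma alg2:
  fixes \<sigma> vm vp a b Vx A :: real
  assumes "\<sigma> \<noteq> 0" "vp \<noteq> vm" "\<sigma> * (vp-vm) + (b-a) = 0" "\<sigma> * Vx + A = \<sigma> * vm + a"
  shows "(Vx - (vp+vm)/2) * (2/(vp-vm)) = - (2/(b-a) * ((b+a)/2)) + 2/(b-a) * A"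
proof -
  define d where "d = vp - vm"
  have vp: "vp = vm + d" by (simp add: d_def)
  have b: "b = a - \<sigma> * d" using assms(3) by (simp add: d_def)
  have A: "A = \<sigma> * vm + a - \<sigma> * Vx" using assms(4) by simp
  have ne: "d \<noteq> 0" using assms(2) vp by auto
  show ?thesis unfolding A b vp using ne assms(1) by (simp add: field_simps)
qed


lemma C1_facts:
  fixes R :: "real \<Rightarrow> real"
  assumes "R C1_differentiable_on UNIV"
  obtains D where "\<And>x. (R has_real_derivative D x) (at x)" "continuous_on UNIV D"
    "\<And>x. deriv R x = D x" "continuous_on UNIV R"
proof -
  obtain D where D: "\<And>x. (R has_real_derivative D x) (at x)" "continuous_on UNIV D"
    using assms unfolding C1_differentiable_on_def has_real_derivative_iff_has_vector_derivative by blast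
  moreover have "\<And>x. deriv R x = D x" using D(1) DERIV_imp_deriv by blast
  moreover have "continuous_on UNIV R"
    using D(1) by (meson DERIV_isCont continuous_at_imp_continuous_on)
  ultimately show ?thesis using that by blast
qed

lemma cont_int: "continuous_on UNIV (f::real\<Rightarrow>real) \<Longrightarrow> f integrable_on {a..b}"
  by (intro integrable_continuous_real) (auto intro: continuous_on_subset)

lemma bounded_abs: "bounded (range (f::real\<Rightarrow>real)) \<longleftrightarrow> (\<exists>B. \<forall>x. \<bar>f x\<bar> \<le> B)"
  unfolding bounded_iff by auto

lemma alg3:
  fixes vm vp :: real
  assumes "vp \<noteq> vm"
  shows "- ((vp+vm)/2) * (2/(vp-vm)) + 2/(vp-vm) * vm = -1"
    and "- ((vp+vm)/2) * (2/(vp-vm)) + 2/(vp-vm) * vp = 1"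
proof -
  define d where "d = vp - vm"
  have vp: "vp = vm + d" by (simp add: d_def)
  have "d \<noteq> 0" using assms d_def by simp
  then show "- ((vp+vm)/2) * (2/(vp-vm)) + 2/(vp-vm) * vm = -1"
    and "- ((vp+vm)/2) * (2/(vp-vm)) + 2/(vp-vm) * vp = 1"
    unfolding vp by (simp_all add: field_simps)
qed

lemma partA:
  fixes \<Phi> :: "real \<Rightarrow> real" and rm rp vm vp \<sigma> :: real
  assumes sm: "smooth_real \<Phi>"
    and s0: "\<sigma> \<noteq> 0" and r0: "rm \<noteq> rp"
    and h1: "\<sigma> * jump rm rp + jump vm vp = 0"
    and h2: "\<sigma> * jump vm vp + jump (deriv \<Phi> rm) (deriv \<Phi> rp) = 0"
    and fr: "is_front \<Phi> \<sigma> rm rp vm vp R V"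
  shows "\<exists>!W. is_W_sol \<Phi> rm rp W \<and> front_corr rm rp vm vp R V W"
proof -
  let ?P = "deriv \<Phi>"
  have jv: "vp - vm \<noteq> 0" using h1 s0 r0 by (auto simp: jump_def)
  have jP: "?P rp - ?P rm \<noteq> 0" using h2 s0 jv by (auto simp: jump_def)
  have Pc: "continuous_on UNIV ?P" by (rule smooth_facts(2)[OF sm])
  from fr have R1: "R C1_differentiable_on UNIV" and V1: "V C1_differentiable_on UNIV"
    and bV: "bounded (range V)"
    and Rb: "(R \<longlongrightarrow> rm) at_bot" and Vb: "(V \<longlongrightarrow> vm) at_bot" and Vt: "(V \<longlongrightarrow> vp) at_top"
    and e1: "\<And>x. \<sigma> * deriv R x + V (x + 1) - V x = 0"
    and e2: "\<And>x. \<sigma> * deriv V x + ?P (R x) - ?P (R (x - 1)) = 0"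
    unfolding is_front_def by auto
  obtain DR where DR: "\<And>x. (R has_real_derivative DR x) (at x)" "\<And>x. deriv R x = DR x" "continuous_on UNIV R"
    using C1_facts[OF R1] by metis
  obtain DV where DV: "\<And>x. (V has_real_derivative DV x) (at x)" "\<And>x. deriv V x = DV x" "continuous_on UNIV V"
    using C1_facts[OF V1] by metis
  define mv where "mv = (vp + vm)/2"
  define W where "W x = - mv * (2/(vp-vm)) + 2/(vp-vm) * V x" for x
  have Wc: "continuous_on UNIV W" unfolding W_def by (intro continuous_intros DV(3))
  have liV: "\<And>a b. V integrable_on {a..b}" by (rule cont_int[OF DV(3)])
  have liW: "\<And>a b. W integrable_on {a..b}" by (rule cont_int[OF Wc])
  have avgW: "avg W x = - mv * (2/(vp-vm)) + 2/(vp-vm) * avg V x" for x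
    unfolding W_def[abs_def] by (rule avg_affine[OF liV])
  have Vrep: "V x = mean vm vp + jump vm vp / 2 * W x" for x
  proof -
    define d where "d = vp - vm"
    have vp: "vp = vm + d" by (simp add: d_def)
    have "d \<noteq> 0" using jv d_def by simp
    then show ?thesis unfolding W_def mv_def mean_def jump_def vp by (simp add: field_simps)
  qed
  define G where "G x = \<sigma> * R (x - 1/2) + avg V x" for x
  have Gd: "(G has_real_derivative 0) (at x)" for x
  proof -
    have "(G has_real_derivative \<sigma> * DR (x - 1/2) + (V (x + 1/2) - V (x - 1/2))) (at x)"
      unfolding G_def[abs_def]
      by (auto intro!: derivative_eq_intros DERIV_chain2[OF DR(1)] avg_deriv[OF DV(3)])
    moreover have "\<sigma> * DR (x - 1/2) + (V (x + 1/2) - V (x - 1/2)) = 0"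
      using e1[of "x - 1/2"] DR(2) by (simp add: algebra_simps)
    ultimately show ?thesis by simp
  qed
  have Gl: "(G \<longlongrightarrow> \<sigma> * rm + vm) at_bot"
    unfolding G_def
    by (intro tendsto_intros avg_lim_bot[OF liV Vb] shift_bot[OF Rb, of "-1/2", simplified])
  have Gc: "G x = \<sigma> * rm + vm" for x
  proof -
    have "\<And>y. G y = G 0" using DERIV_isconst_all Gd by blast
    then have "(G \<longlongrightarrow> G 0) at_bot" by (intro tendsto_eventually) auto
    then have "G 0 = \<sigma> * rm + vm" using Gl by (intro tendsto_unique[OF trivial_limit_at_bot_linorder])
    then show ?thesis using \<open>\<And>y. G y = G 0\<close> by simp
  qed
  have corr2: "R (x - 1/2) = mean rm rp + jump rm rp / 2 * avg W x" for x
    unfolding avgW mean_def jump_def mv_def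
    by (rule alg1[OF s0 _ _ Gc[unfolded G_def]]) (use jv h1 in \<open>auto simp: jump_def\<close>)
  define F where "F s = ?P (R (s - 1/2))" for s
  have Fc: "continuous_on UNIV F" unfolding F_def
    by (intro continuous_on_compose2[OF Pc] continuous_intros continuous_on_compose2[OF DR(3)]) auto
  have liF: "\<And>a b. F integrable_on {a..b}" by (rule cont_int[OF Fc])
  define H where "H x = \<sigma> * V x + avg F x" for x
  have Hd: "(H has_real_derivative 0) (at x)" for x
  proof -
    have "(H has_real_derivative \<sigma> * DV x + (F (x + 1/2) - F (x - 1/2))) (at x)"
      unfolding H_def[abs_def]
      by (auto intro!: derivative_eq_intros DV(1) avg_deriv[OF Fc])
    moreover have "\<sigma> * DV x + (F (x + 1/2) - F (x - 1/2)) = 0"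
      using e2[of x] DV(2) by (simp add: F_def algebra_simps)
    ultimately show ?thesis by simp
  qed
  have Fl: "(F \<longlongrightarrow> ?P rm) at_bot"
    unfolding F_def
    using isCont_tendsto_compose[OF _ shift_bot[OF Rb, of "-1/2"]] Pc
    by (simp add: continuous_on_eq_continuous_at) blast
  have Hl: "(H \<longlongrightarrow> \<sigma> * vm + ?P rm) at_bot"
    unfolding H_def by (intro tendsto_intros avg_lim_bot[OF liF Fl] Vb)
  have Hc: "H x = \<sigma> * vm + ?P rm" for x
  proof -
    have "\<And>y. H y = H 0" using DERIV_isconst_all Hd by blast
    then have "(H \<longlongrightarrow> H 0) at_bot" by (intro tendsto_eventually) auto
    then have "H 0 = \<sigma> * vm + ?P rm" using Hl by (intro tendsto_unique[OF trivial_limit_at_bot_linorder])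
    then show ?thesis using \<open>\<And>y. H y = H 0\<close> by simp
  qed
  have gW: "deriv (Phi_hat \<Phi> rm rp) (avg W s) = - (2/(?P rp - ?P rm) * ((?P rp + ?P rm)/2)) + 2/(?P rp - ?P rm) * F s" for s
    using deriv_Phi_hat[OF sm, of rm rp "avg W s"] jP r0 corr2[of s]
    by (simp add: jump_def mean_def F_def right_diff_distrib)
  have Weq: "W x = avg (\<lambda>s. deriv (Phi_hat \<Phi> rm rp) (avg W s)) x" for x
  proof -
    have "avg (\<lambda>s. deriv (Phi_hat \<Phi> rm rp) (avg W s)) x
        = - (2/(?P rp - ?P rm) * ((?P rp + ?P rm)/2)) + 2/(?P rp - ?P rm) * avg F x"
      unfolding gW by (rule avg_affine[OF liF])
    also have "... = W x"
    proof -
      have a: "vp \<noteq> vm" using jv by simp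
      have b: "\<sigma> * (vp - vm) + (?P rp - ?P rm) = 0" using h2 by (simp add: jump_def)
      have "(V x - (vp+vm)/2) * (2/(vp-vm)) = - (2/(?P rp - ?P rm) * ((?P rp + ?P rm)/2)) + 2/(?P rp - ?P rm) * avg F x"
        by (rule alg2[OF s0 a b Hc[of x, unfolded H_def]])
      then show ?thesis unfolding W_def mv_def by (simp add: algebra_simps)
    qed
    finally show ?thesis by simp
  qed
  have Wb: "bounded (range W)"
  proof -
    obtain B where B: "\<And>x. \<bar>V x\<bar> \<le> B" using bV bounded_abs by metis
    have "\<bar>W x\<bar> \<le> \<bar>mv * (2/(vp-vm))\<bar> + \<bar>2/(vp-vm)\<bar> * B" for x
    proof -
      have "\<bar>W x\<bar> \<le> \<bar>mv * (2/(vp-vm))\<bar> + \<bar>2/(vp-vm) * V x\<bar>"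
        unfolding W_def by (metis abs_minus_cancel abs_triangle_ineq mult_minus_left)
      also have "\<bar>2/(vp-vm) * V x\<bar> \<le> \<bar>2/(vp-vm)\<bar> * B"
        unfolding abs_mult by (rule mult_left_mono[OF B]) simp
      finally show ?thesis by simp
    qed
    then show ?thesis using bounded_abs by blast
  qed
  have Wlb: "(W \<longlongrightarrow> -1) at_bot"
  proof -
    have "(W \<longlongrightarrow> - mv * (2/(vp-vm)) + 2/(vp-vm) * vm) at_bot"
      unfolding W_def by (intro tendsto_intros Vb)
    moreover have "- mv * (2/(vp-vm)) + 2/(vp-vm) * vm = -1"
      unfolding mv_def using alg3 jv by simp
    ultimately show ?thesis by simp
  qed
  have Wlt: "(W \<longlongrightarrow> 1) at_top"
  proof -
    have "(W \<longlongrightarrow> - mv * (2/(vp-vm)) + 2/(vp-vm) * vp) at_top"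
      unfolding W_def by (intro tendsto_intros Vt)
    moreover have "- mv * (2/(vp-vm)) + 2/(vp-vm) * vp = 1"
      unfolding mv_def using alg3 jv by simp
    ultimately show ?thesis by simp
  qed
  have Wm: "W \<in> borel_measurable lborel"
    using borel_measurable_continuous_onI[OF Wc] by simp
  have sol: "is_W_sol \<Phi> rm rp W"
    unfolding is_W_sol_def using Wm Wb Weq Wlb Wlt by blast
  have corr: "front_corr rm rp vm vp R V W"
    unfolding front_corr_def using Vrep corr2 by blast
  show ?thesis
  proof (rule ex1I[of _ W])
    show "is_W_sol \<Phi> rm rp W \<and> front_corr rm rp vm vp R V W" using sol corr by blast
  next
    fix W' assume "is_W_sol \<Phi> rm rp W' \<and> front_corr rm rp vm vp R V W'"
    then have "V x = mean vm vp + jump vm vp / 2 * W' x" for x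
      unfolding front_corr_def by blast
    then have "W' x = W x" for x using Vrep[of x] jv by (simp add: jump_def)
    then show "W' = W" by auto
  qed
qed


lemma bounded_affine:
  fixes f :: "real \<Rightarrow> real"
  assumes "\<And>x. \<bar>f x\<bar> \<le> B"
  shows "bounded (range (\<lambda>x. a + b * f x))"
proof -
  have "\<bar>a + b * f x\<bar> \<le> \<bar>a\<bar> + \<bar>b\<bar> * B" for x
  proof -
    have "\<bar>a + b * f x\<bar> \<le> \<bar>a\<bar> + \<bar>b * f x\<bar>" by (rule abs_triangle_ineq)
    also have "\<bar>b * f x\<bar> \<le> \<bar>b\<bar> * B" unfolding abs_mult by (rule mult_left_mono[OF assms]) simp
    finally show ?thesis by simp
  qed
  then show ?thesis unfolding bounded_abs by blast
qed

lemma partB: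
  fixes \<Phi> :: "real \<Rightarrow> real" and rm rp vm vp \<sigma> :: real
  assumes sm: "smooth_real \<Phi>"
    and s0: "\<sigma> \<noteq> 0" and r0: "rm \<noteq> rp"
    and h1: "\<sigma> * jump rm rp + jump vm vp = 0"
    and h2: "\<sigma> * jump vm vp + jump (deriv \<Phi> rm) (deriv \<Phi> rp) = 0"
    and sol: "is_W_sol \<Phi> rm rp W"
  shows "\<exists>!RV. is_front \<Phi> \<sigma> rm rp vm vp (fst RV) (snd RV) \<and>
                   front_corr rm rp vm vp (fst RV) (snd RV) W"
proof -
  let ?P = "deriv \<Phi>"
  have jv: "vp - vm \<noteq> 0" using h1 s0 r0 by (auto simp: jump_def)
  have jP: "?P rp - ?P rm \<noteq> 0" using h2 s0 jv by (auto simp: jump_def)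
  have Pc: "continuous_on UNIV ?P" by (rule smooth_facts(2)[OF sm])
  from sol have Wm: "W \<in> borel_measurable lborel" and Wb: "bounded (range W)"
    and Weq: "\<And>x. W x = avg (\<lambda>s. deriv (Phi_hat \<Phi> rm rp) (avg W s)) x"
    and Wlb: "(W \<longlongrightarrow> -1) at_bot" and Wlt: "(W \<longlongrightarrow> 1) at_top"
    unfolding is_W_sol_def by auto
  obtain B where B: "\<And>x. \<bar>W x\<bar> \<le> B" using Wb bounded_abs by metis
  have liW: "\<And>a b. W integrable_on {a..b}" using meas_int[OF Wm B] .
  have aWc: "continuous_on UNIV (avg W)" by (rule avg_cont[OF liW])
  have aWB: "\<bar>avg W x\<bar> \<le> B" for x using avg_close[OF liW, of x 0 B] B by simp
  define mr where "mr = mean rm rp"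
  define d where "d = jump rm rp"
  define c0 where "c0 = - (2 / jump (?P rm) (?P rp) * mean (?P rm) (?P rp))"
  define c1 where "c1 = 2 / jump (?P rm) (?P rp)"
  define f where "f s = ?P (mr + d/2 * avg W s)" for s
  have fc: "continuous_on UNIV f" unfolding f_def
    by (intro continuous_on_compose2[OF Pc] continuous_intros aWc) auto
  have lif: "\<And>a b. f integrable_on {a..b}" by (rule cont_int[OF fc])
  have g: "deriv (Phi_hat \<Phi> rm rp) (avg W s) = c0 + c1 * f s" for s
    using deriv_Phi_hat[OF sm, of rm rp "avg W s"] jP r0
    by (simp add: jump_def c0_def c1_def f_def mr_def d_def right_diff_distrib)
  have Wf: "W x = c0 + c1 * avg f x" for x
    using Weq[of x] unfolding g by (simp add: avg_affine[OF lif])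
  have Wd: "(W has_real_derivative c1 * (f (x + 1/2) - f (x - 1/2))) (at x)" for x
  proof -
    have "((\<lambda>x. c0 + c1 * avg f x) has_real_derivative c1 * (f (x + 1/2) - f (x - 1/2))) (at x)"
      by (auto intro!: derivative_eq_intros avg_deriv[OF fc])
    moreover have "(\<lambda>x. c0 + c1 * avg f x) = W" using Wf by auto
    ultimately show ?thesis by simp
  qed
  have Wc: "continuous_on UNIV W"
    using Wd by (meson DERIV_isCont continuous_at_imp_continuous_on)
  define V where "V x = mean vm vp + jump vm vp / 2 * W x" for x
  define R where "R x = mr + d/2 * avg W (x + 1/2)" for x
  have fR: "f (x + 1/2) = ?P (R x)" for x unfolding f_def R_def by simp
  have fR': "f (x - 1/2) = ?P (R (x - 1))" for x unfolding f_def R_def by simp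
  define DV where "DV x = jump vm vp / 2 * (c1 * (f (x + 1/2) - f (x - 1/2)))" for x
  define DR where "DR x = d/2 * (W (x + 1) - W x)" for x
  have Vd: "(V has_real_derivative DV x) (at x)" for x
    unfolding V_def[abs_def] DV_def by (auto intro!: derivative_eq_intros Wd)
  have Rd: "(R has_real_derivative DR x) (at x)" for x
  proof -
    have c: "((\<lambda>x. avg W (x + 1/2)) has_real_derivative (W (x + 1/2 + 1/2) - W (x + 1/2 - 1/2)) * 1) (at x)"
      by (rule DERIV_chain2[OF avg_deriv[OF Wc]]) (auto intro!: derivative_eq_intros)
    have "(R has_real_derivative 0 + d/2 * ((W (x + 1/2 + 1/2) - W (x + 1/2 - 1/2)) * 1)) (at x)"
      unfolding R_def[abs_def] by (intro DERIV_add DERIV_const DERIV_cmult c)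
    then show ?thesis unfolding DR_def by (simp add: add.assoc)
  qed
  have DVc: "continuous_on UNIV DV" unfolding DV_def
    by (intro continuous_intros continuous_on_compose2[OF fc]) auto
  have DRc: "continuous_on UNIV DR" unfolding DR_def
    by (intro continuous_intros continuous_on_compose2[OF Wc]) auto
  have V1: "V C1_differentiable_on UNIV"
    unfolding C1_differentiable_on_def using Vd DVc
    by (auto simp: has_real_derivative_iff_has_vector_derivative)
  have R1: "R C1_differentiable_on UNIV"
    unfolding C1_differentiable_on_def using Rd DRc
    by (auto simp: has_real_derivative_iff_has_vector_derivative)
  have Vb: "bounded (range V)" unfolding V_def[abs_def] by (rule bounded_affine[OF B])
  have Rb: "bounded (range R)" unfolding R_def[abs_def] by (rule bounded_affine[OF aWB])
  have Rlb: "(R \<longlongrightarrow> rm) at_bot"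
  proof -
    have "(R \<longlongrightarrow> mr + d/2 * -1) at_bot" unfolding R_def
      by (intro tendsto_intros shift_bot avg_lim_bot[OF liW Wlb])
    then show ?thesis by (simp add: mr_def d_def mean_def jump_def field_simps)
  qed
  have Rlt: "(R \<longlongrightarrow> rp) at_top"
  proof -
    have "(R \<longlongrightarrow> mr + d/2 * 1) at_top" unfolding R_def
      by (intro tendsto_intros shift_top avg_lim_top[OF liW Wlt])
    then show ?thesis by (simp add: mr_def d_def mean_def jump_def field_simps)
  qed
  have Vlb: "(V \<longlongrightarrow> vm) at_bot"
  proof -
    have "(V \<longlongrightarrow> mean vm vp + jump vm vp / 2 * -1) at_bot" unfolding V_def
      by (intro tendsto_intros Wlb)
    then show ?thesis by (simp add: mean_def jump_def field_simps)
  qed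
  have Vlt: "(V \<longlongrightarrow> vp) at_top"
  proof -
    have "(V \<longlongrightarrow> mean vm vp + jump vm vp / 2 * 1) at_top" unfolding V_def
      by (intro tendsto_intros Wlt)
    then show ?thesis by (simp add: mean_def jump_def field_simps)
  qed
  have E1: "\<sigma> * deriv R x + V (x + 1) - V x = 0" for x
  proof -
    have "\<sigma> * deriv R x + V (x + 1) - V x = (\<sigma> * d + jump vm vp) / 2 * (W (x + 1) - W x)"
      unfolding DERIV_imp_deriv[OF Rd] DR_def V_def by (simp add: algebra_simps)
    then show ?thesis using h1 by (simp add: d_def)
  qed
  have E2: "\<sigma> * deriv V x + ?P (R x) - ?P (R (x - 1)) = 0" for x
  proof -
    have k: "\<sigma> * jump vm vp / 2 * c1 = -1"
    proof -
      have "jump (?P rm) (?P rp) = - (\<sigma> * jump vm vp)" using h2 by simp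
      then show ?thesis unfolding c1_def using jP by (simp add: jump_def)
    qed
    have "\<sigma> * deriv V x + ?P (R x) - ?P (R (x - 1))
        = (\<sigma> * jump vm vp / 2 * c1 + 1) * (?P (R x) - ?P (R (x - 1)))"
      unfolding DERIV_imp_deriv[OF Vd] DV_def fR fR' by (simp add: field_simps)
    then show ?thesis using k by simp
  qed
  have front: "is_front \<Phi> \<sigma> rm rp vm vp R V"
    unfolding is_front_def using R1 V1 Rb Vb Rlb Rlt Vlb Vlt E1 E2 by blast
  have corr: "front_corr rm rp vm vp R V W"
    unfolding front_corr_def V_def R_def mr_def d_def by simp
  show ?thesis
  proof (rule ex1I[of _ "(R, V)"])
    show "is_front \<Phi> \<sigma> rm rp vm vp (fst (R, V)) (snd (R, V)) \<and> front_corr rm rp vm vp (fst (R, V)) (snd (R, V)) W"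
      using front corr by simp
  next
    fix RV assume "is_front \<Phi> \<sigma> rm rp vm vp (fst RV) (snd RV) \<and> front_corr rm rp vm vp (fst RV) (snd RV) W"
    then have c1': "\<And>x. snd RV x = mean vm vp + jump vm vp / 2 * W x"
      and c2': "\<And>x. fst RV (x - 1/2) = mean rm rp + jump rm rp / 2 * avg W x"
      unfolding front_corr_def by blast+
    have "snd RV = V" using c1' by (auto simp: V_def)
    moreover have "fst RV = R"
    proof
      fix x show "fst RV x = R x" using c2'[of "x + 1/2"] by (simp add: R_def mr_def d_def)
    qed
    ultimately show "RV = (R, V)" by (simp add: prod_eq_iff)
  qed
qed

theorem lemma2p2:
  fixes \<Phi> :: "real \<Rightarrow> real" and rm rp vm vp \<sigma> :: real
  assumes "smooth_real \<Phi>" and "convex_on UNIV \<Phi>"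
    and "\<sigma> \<noteq> 0" and "rm \<noteq> rp"
    and "\<sigma> * jump rm rp + jump vm vp = 0"
    and "\<sigma> * jump vm vp + jump (deriv \<Phi> rm) (deriv \<Phi> rp) = 0"
  shows "(\<forall>R V. is_front \<Phi> \<sigma> rm rp vm vp R V \<longrightarrow>
            (\<exists>!W. is_W_sol \<Phi> rm rp W \<and> front_corr rm rp vm vp R V W)) \<and>
         (\<forall>W. is_W_sol \<Phi> rm rp W \<longrightarrow>
            (\<exists>!RV. is_front \<Phi> \<sigma> rm rp vm vp (fst RV) (snd RV) \<and>
                   front_corr rm rp vm vp (fst RV) (snd RV) W))"
  using partA[OF assms(1,3,4,5,6)] partB[OF assms(1,3,4,5,6)] by blast

end
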